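(* The centralizer of $L_0$ in the ring $\mathcal D$ of ordinary differential operators with coefficients in $\mathbb C(x)$ is the polynomial ring $\mathbb C[L_0]$. In particular $L_0$ has true rank $r$.
   Context: Fix an integer $r>1$ and constants $a_1,\dots,a_{r-2}\in\mathbb C$, and let $L_0=\partial^r-a_{r-2}\partial^{r-2}-\cdots-a_1\partial-x$, where $\partial=d/dx$. The rank of a set of ordinary differential operators is the greatest common divisor of the orders of its elements. The true rank of an ordinary differential operator is the rank of its centralizer in the ring of ordinary differential operators. *)

theory Defs
  imports "HOL-Computational_Algebra.Polynomial"
          "HOL-Computational_Algebra.Normalized_Fraction"
          "HOL-Computational_Algebra.Polynomial_Factorial"
          "HOL-Computational_Algebra.Field_as_Ring"
begin

type_synonym rfun = "complex poly fract"

definition rconst :: "complex \<Rightarrow> rfun" where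
  "rconst c = Fract [:c:] 1"

definition rx :: rfun where
  "rx = Fract [:0, 1:] 1"

definition rderiv :: "rfun \<Rightarrow> rfun" where
  "rderiv f = (case quot_of_fract f of (p, q) \<Rightarrow>
       Fract (pderiv p * q - p * pderiv q) (q * q))"

text \<open>Ordinary differential operators with coefficients in C(x):
  an operator sum_i a_i \<partial>^i is represented by the polynomial with coefficients a_i
  (coefficient i = coefficient of \<partial>^i); its order is the degree.
  Multiplication is composition of operators, given by the Leibniz rule
  (a \<partial>^i)(b \<partial>^j) = sum_k (i choose k) a b^(k) \<partial>^(i+j-k).\<close>
type_synonym dop = "rfun poly"

definition dmult :: "dop \<Rightarrow> dop \<Rightarrow> dop" where
  "dmult A B = (\<Sum>i\<le>degree A. \<Sum>j\<le>degree B. \<Sum>k\<le>i.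
       monom (coeff A i * of_nat (i choose k) * (rderiv ^^ k) (coeff B j)) (i + j - k))"

definition dpow :: "dop \<Rightarrow> nat \<Rightarrow> dop" where
  "dpow L n = (dmult L ^^ n) 1"

definition dord :: "dop \<Rightarrow> nat" where
  "dord L = degree L"

definition deval :: "complex poly \<Rightarrow> dop \<Rightarrow> dop" where
  "deval p L = (\<Sum>k\<le>degree p. smult (rconst (coeff p k)) (dpow L k))"

definition centralizer :: "dop \<Rightarrow> dop set" where
  "centralizer L = {M. dmult M L = dmult L M}"

definition op_rank :: "dop set \<Rightarrow> nat" where
  "op_rank S = Gcd (dord ` S)"

definition true_rank :: "dop \<Rightarrow> nat" where
  "true_rank L = op_rank (centralizer L)"

definition L0 :: "nat \<Rightarrow> (nat \<Rightarrow> complex) \<Rightarrow> dop" where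
  "L0 r a = monom 1 r - (\<Sum>k\<in>{1..r-2}. monom (rconst (a k)) k) - [:rx:]"

end

theory Submission
  imports Defs "HOL-Computational_Algebra.Fundamental_Theorem_Algebra"
begin


lemma rderiv_Fract:
  assumes q: "q \<noteq> 0"
  shows "rderiv (Fract p q) = Fract (pderiv p * q - p * pderiv q) (q * q)"
proof -
  obtain p0 q0 where pq0: "quot_of_fract (Fract p q) = (p0, q0)" by (cases "quot_of_fract (Fract p q)")
  have q0: "q0 \<noteq> 0" using snd_quot_of_fract_nonzero[of "Fract p q"] pq0 by simp
  have "Fract p0 q0 = Fract p q" using Fract_quot_of_fract[of "Fract p q"] pq0 by simp
  hence e: "p0 * q = p * q0" using q q0 by (simp add: eq_fract)
  hence d: "pderiv p0 * q + p0 * pderiv q = pderiv p * q0 + p * pderiv q0"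
    by (metis pderiv_mult mult.commute add.commute)
  have "(pderiv p0 * q0 - p0 * pderiv q0) * (q * q) = (pderiv p * q - p * pderiv q) * (q0 * q0)"
    using d e by algebra
  thus ?thesis using q q0 pq0 unfolding rderiv_def by (simp add: eq_fract)
qed

lemma rderiv_add: "rderiv (f + g) = rderiv f + rderiv g"
proof (cases f; cases g)
  fix p q p' q' assume f: "f = Fract p q" "q \<noteq> 0" and g: "g = Fract p' q'" "q' \<noteq> 0"
  show ?thesis using f g
    by (simp add: rderiv_Fract eq_fract pderiv_add pderiv_mult) (simp add: algebra_simps)
qed

lemma rderiv_mult: "rderiv (f * g) = rderiv f * g + f * rderiv g"
proof (cases f; cases g)
  fix p q p' q' assume f: "f = Fract p q" "q \<noteq> 0" and g: "g = Fract p' q'" "q' \<noteq> 0"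
  show ?thesis using f g
    by (simp add: rderiv_Fract eq_fract pderiv_add pderiv_mult) (simp add: algebra_simps)
qed

lemma rderiv_poly: "rderiv (Fract p 1) = Fract (pderiv p) 1"
  by (simp add: rderiv_Fract)

lemma rderiv_0 [simp]: "rderiv 0 = 0"
  using rderiv_Fract[of 1 0] by (simp add: fract_collapse)

lemma rderiv_uminus: "rderiv (- f) = - rderiv f"
  using rderiv_add[of f "-f"] by (metis add.right_inverse rderiv_0 minus_unique)

lemma rderiv_diff: "rderiv (f - g) = rderiv f - rderiv g"
  using rderiv_add[of f "-g"] rderiv_uminus[of g] by simp

lemma rderiv_rconst [simp]: "rderiv (rconst c) = 0"
  by (simp add: rconst_def rderiv_poly fract_collapse)

lemma rderiv_1 [simp]: "rderiv 1 = 0"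
  using rderiv_Fract[of 1 1] by (simp add: fract_collapse)

lemma rderiv_rx [simp]: "rderiv rx = 1"
  by (simp add: rx_def rderiv_poly pderiv_pCons) (metis fract_collapse(2) one_pCons)

lemma rderiv_of_nat [simp]: "rderiv (of_nat n) = 0"
  by (induction n) (simp_all add: rderiv_add)

lemma rderiv_cmult: "rderiv (rconst c * f) = rconst c * rderiv f"
  by (simp add: rderiv_mult)

lemma rderiv_nmult: "rderiv (of_nat c * f) = of_nat c * rderiv f"
  by (simp add: rderiv_mult)

lemma rderiv_sum: "rderiv (sum f A) = (\<Sum>x\<in>A. rderiv (f x))"
  by (induction A rule: infinite_finite_induct) (simp_all add: rderiv_add)

lemma hd_add: "(rderiv ^^ n) (f + g) = (rderiv ^^ n) f + (rderiv ^^ n) g"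
  by (induction n) (simp_all add: rderiv_add)

lemma hd_0 [simp]: "(rderiv ^^ n) 0 = 0"
  by (induction n) simp_all

lemma hd_diff: "(rderiv ^^ n) (f - g) = (rderiv ^^ n) f - (rderiv ^^ n) g"
  by (induction n) (simp_all add: rderiv_diff)

lemma hd_sum: "(rderiv ^^ n) (sum f A) = (\<Sum>x\<in>A. (rderiv ^^ n) (f x))"
  by (induction A rule: infinite_finite_induct) (simp_all add: hd_add)

lemma hd_cmult: "(rderiv ^^ n) (rconst c * f) = rconst c * (rderiv ^^ n) f"
  by (induction n) (simp_all add: rderiv_cmult)

lemma hd_poly: "(rderiv ^^ n) (Fract p 1) = Fract ((pderiv ^^ n) p) 1"
  by (induction n) (simp_all add: rderiv_poly)

lemma Suc_choose': "Suc n choose k = (n choose k) + (if k = 0 then 0 else (n choose (k-1)))"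
  by (cases k) simp_all

lemma sum_Suc_reindex':
  fixes f :: "nat \<Rightarrow> 'a::ab_group_add"
  shows "sum f {0..n} = f 0 - f (Suc n) + sum (\<lambda>i. f (Suc i)) {0..n}"
  by (induct n) auto

lemma hd_mult:
  "(rderiv ^^ n) (f * g) = (\<Sum>i = 0..n. of_nat (n choose i) * (rderiv ^^ i) f * (rderiv ^^ (n-i)) g)"
proof (induction n)
  case 0 then show ?case by simp
next
  case (Suc n)
  have sumeq: "(\<Sum>i = 0..n.
               of_nat (n choose i) * (rderiv ((rderiv ^^ i) f) * (rderiv ^^ (n-i)) g + rderiv ((rderiv ^^ (n-i)) g) * (rderiv ^^ i) f)) =
            g * rderiv ((rderiv ^^ n) f) + (\<Sum>i = 0..n. (rderiv ^^ i) f * (of_nat (Suc n choose i) * (rderiv ^^ (Suc n - i)) g))"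
    apply (simp add: Suc_choose' algebra_simps sum.distrib)
    apply (subst (4) sum_Suc_reindex')
    apply (auto simp: algebra_simps Suc_diff_le intro: sum.cong)
    done
  have "(rderiv ^^ Suc n) (f * g) = (\<Sum>i = 0..n. rderiv (of_nat (n choose i) * (rderiv ^^ i) f * (rderiv ^^ (n-i)) g))"
    using Suc by (simp add: rderiv_sum)
  also have "\<dots> = (\<Sum>i = 0..n.
               of_nat (n choose i) * (rderiv ((rderiv ^^ i) f) * (rderiv ^^ (n-i)) g + rderiv ((rderiv ^^ (n-i)) g) * (rderiv ^^ i) f))"
    by (intro sum.cong refl) (simp add: rderiv_mult algebra_simps)
  also have "\<dots> = (\<Sum>i = 0..Suc n. of_nat (Suc n choose i) * (rderiv ^^ i) f * (rderiv ^^ (Suc n - i)) g)"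
    unfolding sumeq by (simp add: algebra_simps)
  finally show ?case .
qed



definition act :: "dop \<Rightarrow> rfun \<Rightarrow> rfun" where
  "act A f = (\<Sum>i\<le>degree A. coeff A i * (rderiv ^^ i) f)"

lemma act_bound:
  assumes "degree A \<le> N"
  shows "act A f = (\<Sum>i\<le>N. coeff A i * (rderiv ^^ i) f)"
  unfolding act_def
  by (rule sum.mono_neutral_left) (use assms in \<open>auto simp: coeff_eq_0\<close>)

lemma act_add: "act (A + B) f = act A f + act B f"
proof -
  define N where "N = max (degree A) (degree B)"
  have "degree (A + B) \<le> N" unfolding N_def by (rule degree_add_le) auto
  hence "act (A + B) f = (\<Sum>i\<le>N. coeff (A+B) i * (rderiv ^^ i) f)" by (rule act_bound)
  also have "\<dots> = (\<Sum>i\<le>N. coeff A i * (rderiv ^^ i) f) + (\<Sum>i\<le>N. coeff B i * (rderiv ^^ i) f)"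
    by (simp add: sum.distrib algebra_simps)
  also have "\<dots> = act A f + act B f"
    by (subst (1 2) act_bound[symmetric]) (auto simp: N_def)
  finally show ?thesis .
qed

lemma act_0 [simp]: "act 0 f = 0"
  by (simp add: act_def)

lemma act_uminus: "act (- A) f = - act A f"
  by (simp add: act_def sum_negf)

lemma act_diff: "act (A - B) f = act A f - act B f"
  using act_add[of A "-B" f] by (simp add: act_uminus)

lemma act_sum: "act (\<Sum>x\<in>S. A x) f = (\<Sum>x\<in>S. act (A x) f)"
  by (induction S rule: infinite_finite_induct) (simp_all add: act_add)

lemma act_monom: "act (monom c n) f = c * (rderiv ^^ n) f"
proof -
  have "act (monom c n) f = (\<Sum>i\<le>n. coeff (monom c n) i * (rderiv ^^ i) f)"
    by (rule act_bound) (simp add: degree_monom_le)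
  also have "\<dots> = (\<Sum>i\<le>n. if n = i then c * (rderiv ^^ i) f else 0)"
    by (intro sum.cong) (auto simp: coeff_monom)
  also have "\<dots> = c * (rderiv ^^ n) f" by simp
  finally show ?thesis .
qed

lemma act_const: "act [:c:] f = c * f"
  using act_monom[of c 0 f] by (simp add: monom_0)

lemma act_1 [simp]: "act 1 f = f"
  using act_const[of 1 f] by (simp add: one_pCons)

lemma act_smult: "act (smult c A) f = c * act A f"
proof -
  have "act (smult c A) f = (\<Sum>i\<le>degree A. coeff (smult c A) i * (rderiv ^^ i) f)"
    by (rule act_bound) simp
  thus ?thesis by (simp add: act_def sum_distrib_left mult.assoc)
qed

lemma act_fadd: "act A (f + g) = act A f + act A g"
  by (simp add: act_def hd_add sum.distrib algebra_simps)

lemma act_f0 [simp]: "act A 0 = 0"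
  by (simp add: act_def)

lemma act_fdiff: "act A (f - g) = act A f - act A g"
  by (simp add: act_def hd_diff sum_subtractf algebra_simps)

lemma act_fsum: "act A (\<Sum>x\<in>S. f x) = (\<Sum>x\<in>S. act A (f x))"
  by (induction S rule: infinite_finite_induct) (simp_all add: act_fadd)

lemma act_fcmult: "act A (rconst c * f) = rconst c * act A f"
  unfolding act_def hd_cmult sum_distrib_left by (simp add: algebra_simps)

lemma act_dmult: "act (dmult A B) f = act A (act B f)"
proof -
  have "act (dmult A B) f = (\<Sum>i\<le>degree A. \<Sum>j\<le>degree B. \<Sum>k\<le>i.
       coeff A i * of_nat (i choose k) * (rderiv ^^ k) (coeff B j) * (rderiv ^^ (i + j - k)) f)"
    by (simp add: dmult_def act_sum act_monom)
  also have "\<dots> = (\<Sum>i\<le>degree A. coeff A i * (\<Sum>j\<le>degree B. \<Sum>k\<le>i.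
       of_nat (i choose k) * (rderiv ^^ k) (coeff B j) * (rderiv ^^ (i - k)) ((rderiv ^^ j) f)))"
  proof (intro sum.cong refl)
    fix i assume "i \<in> {..degree A}"
    have "\<And>j k. k \<in> {..i} \<Longrightarrow> (rderiv ^^ (i + j - k)) f = (rderiv ^^ (i - k)) ((rderiv ^^ j) f)"
    proof -
      fix j k assume "k \<in> {..i}"
      hence "i + j - k = (i - k) + j" by simp
      thus "(rderiv ^^ (i + j - k)) f = (rderiv ^^ (i - k)) ((rderiv ^^ j) f)"
        by (simp only: funpow_add o_apply)
    qed
    thus "(\<Sum>j\<le>degree B. \<Sum>k\<le>i.
       coeff A i * of_nat (i choose k) * (rderiv ^^ k) (coeff B j) * (rderiv ^^ (i + j - k)) f) =
       coeff A i * (\<Sum>j\<le>degree B. \<Sum>k\<le>i.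
       of_nat (i choose k) * (rderiv ^^ k) (coeff B j) * (rderiv ^^ (i - k)) ((rderiv ^^ j) f))"
      by (simp add: sum_distrib_left mult.assoc)
  qed
  also have "\<dots> = act A (act B f)"
    by (simp add: act_def hd_sum hd_mult atMost_atLeast0)
  finally show ?thesis .
qed



lemma Fract_eq_0_iff: "Fract p 1 = (0::rfun) \<longleftrightarrow> p = 0"
  by (simp add: eq_fract(1)[of 1 1] fract_expand(1))

lemma rconst_eq_0_iff [simp]: "rconst c = 0 \<longleftrightarrow> c = 0"
  by (simp add: rconst_def Fract_eq_0_iff)

lemma hpderiv_monom_gt: "m > n \<Longrightarrow> (pderiv ^^ m) (monom (1::complex) n) = 0"
  by (rule poly_eqI) (simp add: coeff_higher_pderiv coeff_monom)

lemma hpderiv_monom_eq: "(pderiv ^^ n) (monom (1::complex) n) = [:fact n:]"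
  by (rule poly_eqI) (auto simp: coeff_higher_pderiv coeff_monom pochhammer_fact coeff_pCons split: nat.split)

lemma faithful0:
  assumes "\<And>p. act A (Fract p 1) = 0"
  shows "A = 0"
proof -
  have "coeff A n = 0" for n
  proof (induction n rule: less_induct)
    case (less n)
    define N where "N = max (degree A) n"
    have "0 = act A (Fract (monom 1 n) 1)" using assms by simp
    also have "\<dots> = (\<Sum>i\<le>N. coeff A i * Fract ((pderiv ^^ i) (monom 1 n)) 1)"
      by (subst act_bound[of _ N]) (auto simp: N_def hd_poly)
    also have "\<dots> = (\<Sum>i\<le>N. if i = n then coeff A n * rconst (fact n) else 0)"
    proof (intro sum.cong refl)
      fix i assume "i \<in> {..N}"
      show "coeff A i * Fract ((pderiv ^^ i) (monom 1 n)) 1 = (if i = n then coeff A n * rconst (fact n) else 0)"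
        using less[of i] by (cases "i < n"; cases "i = n")
           (auto simp: hpderiv_monom_eq hpderiv_monom_gt rconst_def fract_collapse)
    qed
    also have "\<dots> = coeff A n * rconst (fact n)" by (simp add: N_def)
    finally show ?case by simp
  qed
  thus ?thesis by (simp add: poly_eqI)
qed

lemma faithful:
  assumes "\<And>p. act A (Fract p 1) = act B (Fract p 1)"
  shows "A = B"
  using faithful0[of "A - B"] assms by (simp add: act_diff)



definition val :: "complex \<Rightarrow> rfun \<Rightarrow> int" where
  "val \<alpha> f = int (order \<alpha> (fst (quot_of_fract f))) - int (order \<alpha> (snd (quot_of_fract f)))"

lemma Fract_eq_0_iff': "q \<noteq> 0 \<Longrightarrow> Fract p q = (0::rfun) \<longleftrightarrow> p = 0"
  by (simp add: eq_fract(1)[of q 1] fract_expand(1))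

lemma val_Fract:
  assumes p: "p \<noteq> 0" and q: "q \<noteq> 0"
  shows "val \<alpha> (Fract p q) = int (order \<alpha> p) - int (order \<alpha> q)"
proof -
  obtain p0 q0 where pq0: "quot_of_fract (Fract p q) = (p0, q0)" by (cases "quot_of_fract (Fract p q)")
  have q0: "q0 \<noteq> 0" using snd_quot_of_fract_nonzero[of "Fract p q"] pq0 by simp
  have nz: "Fract p q \<noteq> 0" using p q by (simp add: Fract_eq_0_iff')
  have p0: "p0 \<noteq> 0" using fst_quot_of_fract_eq_0_iff[of "Fract p q"] pq0 nz by simp
  have "Fract p0 q0 = Fract p q" using Fract_quot_of_fract[of "Fract p q"] pq0 by simp
  hence e: "p0 * q = p * q0" using q q0 by (simp add: eq_fract)
  have "order \<alpha> p0 + order \<alpha> q = order \<alpha> p + order \<alpha> q0"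
    using order_mult[of p0 q \<alpha>] order_mult[of p q0 \<alpha>] e p0 q0 p q by simp
  thus ?thesis using pq0 by (simp add: val_def)
qed

lemma order_add_ge:
  assumes "p \<noteq> 0" "q \<noteq> 0" "p + q \<noteq> 0"
  shows "min (order \<alpha> p) (order \<alpha> q) \<le> order \<alpha> (p + q)"
proof -
  let ?m = "min (order \<alpha> p) (order \<alpha> q)"
  have "[:-\<alpha>, 1:] ^ ?m dvd p" "[:-\<alpha>, 1:] ^ ?m dvd q" by (auto simp: order_divides)
  hence "[:-\<alpha>, 1:] ^ ?m dvd p + q" by simp
  thus ?thesis using assms by (simp add: order_divides)
qed

lemma val_mult:
  assumes "f \<noteq> 0" "g \<noteq> 0"
  shows "val \<alpha> (f * g) = val \<alpha> f + val \<alpha> g"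
proof (cases f; cases g)
  fix p q p' q' assume f: "f = Fract p q" "q \<noteq> 0" and g: "g = Fract p' q'" "q' \<noteq> 0"
  have "p \<noteq> 0" "p' \<noteq> 0" using assms f g by (auto simp: Fract_eq_0_iff')
  thus ?thesis using f g
    by (simp add: val_Fract order_mult)
qed

lemma val_add:
  assumes "f \<noteq> 0" "g \<noteq> 0" "f + g \<noteq> 0"
  shows "min (val \<alpha> f) (val \<alpha> g) \<le> val \<alpha> (f + g)"
proof (cases f; cases g)
  fix p q p' q' assume f: "f = Fract p q" "q \<noteq> 0" and g: "g = Fract p' q'" "q' \<noteq> 0"
  have pp: "p \<noteq> 0" "p' \<noteq> 0" using assms f g by (auto simp: Fract_eq_0_iff')
  have s: "p * q' + p' * q \<noteq> 0" using assms(3) f g by (auto simp: Fract_eq_0_iff')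
  have "min (order \<alpha> (p * q')) (order \<alpha> (p' * q)) \<le> order \<alpha> (p * q' + p' * q)"
    by (rule order_add_ge) (use pp f g s in auto)
  thus ?thesis using f g pp s
    by (simp add: val_Fract order_mult)
qed

lemma val_uminus: "val \<alpha> (- f) = val \<alpha> f"
proof (cases "f = 0")
  case False
  then show ?thesis
  proof (cases f)
    fix p q assume f: "f = Fract p q" "q \<noteq> 0"
    hence "p \<noteq> 0" using False by (auto simp: Fract_eq_0_iff')
    thus ?thesis using f by (simp add: val_Fract)
  qed
qed simp

lemma val_add_strict:
  assumes "f \<noteq> 0" "g \<noteq> 0" "val \<alpha> f < val \<alpha> g"
  shows "f + g \<noteq> 0 \<and> val \<alpha> (f + g) = val \<alpha> f"
proof -
  have ne: "f + g \<noteq> 0"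
  proof
    assume "f + g = 0"
    hence "g = - f" by (simp add: eq_neg_iff_add_eq_0 add.commute)
    thus False using assms val_uminus[of \<alpha> f] by simp
  qed
  have a: "min (val \<alpha> f) (val \<alpha> g) \<le> val \<alpha> (f + g)" by (rule val_add) (use assms ne in auto)
  have "min (val \<alpha> (f + g)) (val \<alpha> (- g)) \<le> val \<alpha> (f + g + - g)"
    by (rule val_add) (use assms ne in auto)
  hence "min (val \<alpha> (f + g)) (val \<alpha> g) \<le> val \<alpha> f" by (simp add: val_uminus)
  thus ?thesis using a ne assms by linarith
qed

lemma val_poly: "p \<noteq> 0 \<Longrightarrow> 0 \<le> val \<alpha> (Fract p 1)"
  by (simp add: val_Fract)

lemma val_rconst: "c \<noteq> 0 \<Longrightarrow> val \<alpha> (rconst c) = 0"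
  by (simp add: val_Fract rconst_def order_0I)

lemma val_deriv:
  assumes nz: "f \<noteq> 0" and neg: "val \<alpha> f < 0"
  shows "rderiv f \<noteq> 0 \<and> val \<alpha> (rderiv f) = val \<alpha> f - 1"
proof (cases f)
  fix p q assume f: "f = Fract p q" and q: "q \<noteq> 0"
  have p: "p \<noteq> 0" using nz f q by (auto simp: Fract_eq_0_iff')
  define u where "u = [:-\<alpha>, 1:]"
  obtain p1 where p1: "p = u ^ order \<alpha> p * p1" "\<not> u dvd p1" using order_decomp[OF p] u_def by blast
  obtain q1 where q1: "q = u ^ order \<alpha> q * q1" "\<not> u dvd q1" using order_decomp[OF q] u_def by blast
  have vf: "val \<alpha> f = int (order \<alpha> p) - int (order \<alpha> q)" using f p q by (simp add: val_Fract)
  hence lt: "order \<alpha> p < order \<alpha> q" using neg by simp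
  define s where "s = order \<alpha> p"
  define T where "T = order \<alpha> q - s"
  have T1: "T \<ge> 1" using lt by (simp add: T_def s_def)
  have u0: "u \<noteq> 0" by (simp add: u_def)
  have p10: "p1 \<noteq> 0" using p1 by auto
  have q10: "q1 \<noteq> 0" using q1 by auto
  have pa: "poly p1 \<alpha> \<noteq> 0" "poly q1 \<alpha> \<noteq> 0" using p1 q1 by (auto simp: poly_eq_0_iff_dvd u_def)
  define w where "w = u ^ T * q1"
  have w0: "w \<noteq> 0" using u0 q10 by (simp add: w_def)
  have "u ^ order \<alpha> q = u ^ s * u ^ T" using lt by (simp add: power_add[symmetric] T_def s_def)
  hence "q = u ^ s * w" using q1 by (simp add: w_def mult.assoc)
  hence "f = Fract (u ^ s * p1) (u ^ s * w)" using f p1 s_def by simp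
  hence f2: "f = Fract p1 w" using u0 by (simp add: mult_fract_cancel)
  define R where "R = u * pderiv p1 * q1 - smult (of_nat T) (p1 * q1) - u * p1 * pderiv q1"
  have pu: "pderiv u = 1" by (simp add: u_def pderiv_pCons)
  obtain T' where T': "T = Suc T'" using T1 by (cases T) auto
  have N: "pderiv p1 * w - p1 * pderiv w = u ^ (T - 1) * R"
  proof -
    have pw: "pderiv (u ^ Suc T') = smult (of_nat (Suc T')) (u ^ T')" by (simp only: pderiv_power_Suc pu mult_1_right)
    show ?thesis
      unfolding w_def R_def T' by (simp only: pderiv_mult pw diff_Suc_1) (simp add: algebra_simps)
  qed
  have "poly R \<alpha> = - of_nat T * poly p1 \<alpha> * poly q1 \<alpha>" by (simp add: R_def u_def)
  hence Ra: "poly R \<alpha> \<noteq> 0" using pa T1 by simp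
  hence R0: "R \<noteq> 0" by auto
  have oR: "order \<alpha> R = 0" using Ra by (simp add: order_0I)
  have oq1: "order \<alpha> q1 = 0" "order \<alpha> p1 = 0" using pa by (simp_all add: order_0I)
  have ou: "\<And>k. order \<alpha> (u ^ k) = k" by (simp add: u_def order_power_n_n)
  have Nz: "u ^ (T - 1) * R \<noteq> 0" using u0 R0 by simp
  have d: "rderiv f = Fract (u ^ (T - 1) * R) (w * w)" using f2 w0 N by (simp add: rderiv_Fract)
  have "val \<alpha> (rderiv f) = int (order \<alpha> (u ^ (T - 1) * R)) - int (order \<alpha> (w * w))"
    using d Nz w0 by (simp add: val_Fract)
  also have "\<dots> = int (T - 1) - 2 * int T"
    using Nz w0 u0 q10 R0 by (simp add: order_mult oR ou oq1 w_def)
  finally have "val \<alpha> (rderiv f) = int (T - 1) - 2 * int T" .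
  moreover have "val \<alpha> f = - int T" using f2 w0 p10 u0 q10 by (simp add: val_Fract order_mult ou oq1 w_def)
  moreover have "rderiv f \<noteq> 0" using d Nz w0 by (simp add: Fract_eq_0_iff')
  ultimately show ?thesis using T1 by simp
qed

lemma val_nonneg_poly:
  assumes nz: "f \<noteq> 0" and v: "\<And>\<alpha>. 0 \<le> val \<alpha> f"
  shows "\<exists>q. f = Fract q 1"
proof -
  obtain p q where pq: "quot_of_fract f = (p, q)" by (cases "quot_of_fract f")
  have q: "q \<noteq> 0" using snd_quot_of_fract_nonzero[of f] pq by simp
  have p: "p \<noteq> 0" using fst_quot_of_fract_eq_0_iff[of f] pq nz by simp
  have fe: "f = Fract p q" using Fract_quot_of_fract[of f] pq by simp
  have cop: "coprime p q" using coprime_quot_of_fract[of f] pq by simp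
  show ?thesis
  proof (cases "degree q = 0")
    case True
    then obtain c where c: "q = [:c:]" by (metis degree_eq_zeroE)
    hence c0: "c \<noteq> 0" using q by simp
    have "Fract p q = Fract (smult (inverse c) p) 1"
      using c c0 q by (simp add: eq_fract)
    thus ?thesis using fe by blast
  next
    case False
    then obtain \<alpha> where a: "poly q \<alpha> = 0" using alg_closed_imp_poly_has_root by blast
    have "poly p \<alpha> \<noteq> 0"
    proof
      assume "poly p \<alpha> = 0"
      hence "is_unit [:-\<alpha>, 1:]" using a cop by (meson coprime_common_divisor poly_eq_0_iff_dvd)
      thus False by (simp add: is_unit_poly_iff)
    qed
    hence "order \<alpha> p = 0" by (simp add: order_0I)
    moreover have "order \<alpha> q \<noteq> 0" using a q by (simp add: order_root)
    ultimately have "val \<alpha> f < 0" using fe p q by (simp add: val_Fract)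
    thus ?thesis using v[of \<alpha>] by simp
  qed
qed



lemma act_L0: "act (L0 r a) f = (rderiv ^^ r) f - (\<Sum>k\<in>{1..r-2}. rconst (a k) * (rderiv ^^ k) f) - rx * f"
  by (simp add: L0_def act_diff act_sum act_monom act_const)

definition Lp :: "nat \<Rightarrow> (nat \<Rightarrow> complex) \<Rightarrow> complex poly \<Rightarrow> complex poly" where
  "Lp r a p = (pderiv ^^ r) p - (\<Sum>k\<in>{1..r-2}. smult (a k) ((pderiv ^^ k) p)) - pCons 0 p"

lemma Fract_diff1: "Fract (p - q) 1 = Fract p 1 - (Fract q 1 :: rfun)"
  by simp

lemma Fract_add1: "Fract (p + q) 1 = Fract p 1 + (Fract q 1 :: rfun)"
  by simp

lemma Fract_sum1: "Fract (\<Sum>x\<in>S. f x) 1 = (\<Sum>x\<in>S. Fract (f x) 1 :: rfun)"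
  by (induction S rule: infinite_finite_induct) (simp_all add: Fract_add1 fract_collapse)

lemma rconst_mult_Fract: "rconst c * Fract p 1 = Fract (smult c p) 1"
  by (simp add: rconst_def)

lemma rx_mult_Fract: "rx * Fract p 1 = Fract (pCons 0 p) 1"
  by (simp add: rx_def)

lemma act_L0_poly: "act (L0 r a) (Fract p 1) = Fract (Lp r a p) 1"
  by (simp only: act_L0 Lp_def Fract_diff1 Fract_sum1 hd_poly rconst_mult_Fract rx_mult_Fract)

lemma degree_Lp:
  assumes "p \<noteq> 0"
  shows "degree (Lp r a p) = Suc (degree p)"
proof -
  have "degree ((pderiv ^^ r) p - (\<Sum>k\<in>{1..r-2}. smult (a k) ((pderiv ^^ k) p))) \<le> degree p"
    by (intro degree_diff_le degree_sum_le) (auto simp: degree_higher_pderiv intro: order.trans[OF degree_smult_le])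
  also have "\<dots> < degree (- pCons 0 p)" using assms by simp
  finally have h: "degree ((pderiv ^^ r) p - (\<Sum>k\<in>{1..r-2}. smult (a k) ((pderiv ^^ k) p)) + - pCons 0 p) = degree (- pCons 0 p)"
    by (rule degree_add_eq_right)
  have eq: "Lp r a p = ((pderiv ^^ r) p - (\<Sum>k\<in>{1..r-2}. smult (a k) ((pderiv ^^ k) p))) + - pCons 0 p"
    unfolding Lp_def by (rule diff_conv_add_uminus)
  have "degree (Lp r a p) = degree (- pCons 0 p)" unfolding eq by (rule h)
  thus ?thesis using assms by simp
qed

definition Q :: "nat \<Rightarrow> (nat \<Rightarrow> complex) \<Rightarrow> nat \<Rightarrow> complex poly" where
  "Q r a k = (Lp r a ^^ k) 1"

lemma Q_props: "Q r a k \<noteq> 0 \<and> degree (Q r a k) = k"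
proof (induction k)
  case 0 then show ?case by (simp add: Q_def)
next
  case (Suc k)
  have "degree (Q r a (Suc k)) = Suc k" using Suc by (simp add: Q_def degree_Lp)
  thus ?case by auto
qed

lemma actL_pow_1: "(act (L0 r a) ^^ k) 1 = Fract (Q r a k) 1"
  by (induction k) (simp_all add: Q_def act_L0_poly fract_collapse)

lemma act_dpow: "act (dpow L k) f = (act L ^^ k) f"
proof (induction k arbitrary: f)
  case 0 then show ?case by (simp add: dpow_def)
next
  case (Suc k)
  have "dpow L (Suc k) = dmult L (dpow L k)" by (simp add: dpow_def)
  thus ?case using Suc by (simp add: act_dmult)
qed

lemma act_deval: "act (deval c L) f = (\<Sum>k\<le>degree c. rconst (coeff c k) * (act L ^^ k) f)"
  by (simp add: deval_def act_sum act_smult act_dpow)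

lemma act_deval_bound:
  assumes "degree c \<le> N"
  shows "act (deval c L) f = (\<Sum>k\<le>N. rconst (coeff c k) * (act L ^^ k) f)"
  unfolding act_deval
  by (rule sum.mono_neutral_left) (use assms in \<open>auto simp: coeff_eq_0 rconst_def fract_collapse\<close>)

lemma rconst_add: "rconst (x + y) = rconst x + rconst y"
  by (simp add: rconst_def)

lemma act_deval_add: "act (deval (c + d) L) f = act (deval c L) f + act (deval d L) f"
proof -
  define N where "N = max (degree c) (degree d)"
  have "degree (c + d) \<le> N" unfolding N_def by (rule degree_add_le) auto
  hence "act (deval (c + d) L) f = (\<Sum>k\<le>N. rconst (coeff (c + d) k) * (act L ^^ k) f)"
    by (rule act_deval_bound)
  also have "\<dots> = (\<Sum>k\<le>N. rconst (coeff c k) * (act L ^^ k) f) + (\<Sum>k\<le>N. rconst (coeff d k) * (act L ^^ k) f)"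
    by (simp add: rconst_add sum.distrib algebra_simps)
  also have "\<dots> = act (deval c L) f + act (deval d L) f"
    by (subst (1 2) act_deval_bound[symmetric]) (auto simp: N_def)
  finally show ?thesis .
qed

lemma act_deval_monom: "act (deval (monom x n) L) f = rconst x * (act L ^^ n) f"
proof -
  have "act (deval (monom x n) L) f = (\<Sum>k\<le>n. rconst (coeff (monom x n) k) * (act L ^^ k) f)"
    by (rule act_deval_bound) (simp add: degree_monom_le)
  also have "\<dots> = (\<Sum>k\<le>n. if n = k then rconst x * (act L ^^ k) f else 0)"
    by (intro sum.cong) (auto simp: coeff_monom rconst_def fract_collapse)
  also have "\<dots> = rconst x * (act L ^^ n) f" by simp
  finally show ?thesis .
qed

lemma spanning:
  "degree q \<le> n \<Longrightarrow> \<exists>c. Fract q 1 = act (deval c (L0 r a)) 1"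
proof (induction n arbitrary: q)
  case 0
  hence "q = [:coeff q 0:]" by (metis degree_0_id le_0_eq)
  moreover have "act (deval [:coeff q 0:] (L0 r a)) 1 = Fract [:coeff q 0:] 1"
    by (simp add: act_deval rconst_def)
  ultimately show ?case by metis
next
  case (Suc n)
  define Qn where "Qn = Q r a (Suc n)"
  have Qn: "Qn \<noteq> 0" "degree Qn = Suc n" using Q_props[of r a "Suc n"] by (auto simp: Qn_def)
  define lam where "lam = coeff q (Suc n) / lead_coeff Qn"
  define q' where "q' = q - smult lam Qn"
  have "degree q' \<le> Suc n" unfolding q'_def using Suc.prems Qn
    by (intro degree_diff_le) (auto intro: order.trans[OF degree_smult_le])
  moreover have "coeff q' (Suc n) = 0"
  proof -
    have lc: "coeff Qn (Suc n) \<noteq> 0" using Qn by (metis leading_coeff_0_iff)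
    have "lam * coeff Qn (Suc n) = coeff q (Suc n)" using lc Qn(2) by (simp add: lam_def)
    thus ?thesis by (simp add: q'_def)
  qed
  ultimately have "degree q' \<le> n"
  proof (intro degree_le allI impI)
    fix i assume "degree q' \<le> Suc n" "coeff q' (Suc n) = 0" "n < i"
    thus "coeff q' i = 0" by (cases "i = Suc n") (auto intro: coeff_eq_0)
  qed
  then obtain c' where c': "Fract q' 1 = act (deval c' (L0 r a)) 1" using Suc.IH by blast
  have "q = q' + smult lam Qn" by (simp add: q'_def)
  hence "Fract q 1 = Fract q' 1 + rconst lam * Fract Qn 1"
    by (simp only: Fract_add1 rconst_mult_Fract)
  also have "\<dots> = act (deval (c' + monom lam (Suc n)) (L0 r a)) 1"
  proof -
    have h: "(act (L0 r a) ^^ Suc n) 1 = Fract Qn 1" by (simp only: actL_pow_1 Qn_def)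
    show ?thesis by (simp only: c' act_deval_add act_deval_monom h)
  qed
  finally show ?case by blast
qed

lemma deval_comm_act: "act (deval c L) (act L g) = act L (act (deval c L) g)"
  by (simp add: act_deval act_fsum act_fcmult funpow_swap1)

lemma deval_comm: "dmult (deval c L) L = dmult L (deval c L)"
  by (rule faithful) (simp add: act_dmult deval_comm_act)



definition vge :: "complex \<Rightarrow> int \<Rightarrow> rfun \<Rightarrow> bool" where
  "vge \<alpha> B g \<longleftrightarrow> g = 0 \<or> B \<le> val \<alpha> g"

lemma vge_0 [simp]: "vge \<alpha> B 0" by (simp add: vge_def)

lemma vge_mono: "B' \<le> B \<Longrightarrow> vge \<alpha> B g \<Longrightarrow> vge \<alpha> B' g"
  by (auto simp: vge_def)

lemma vge_add: "vge \<alpha> B g \<Longrightarrow> vge \<alpha> B h \<Longrightarrow> vge \<alpha> B (g + h)"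
  unfolding vge_def
proof (elim disjE)
  assume "B \<le> val \<alpha> g" "B \<le> val \<alpha> h"
  show "g + h = 0 \<or> B \<le> val \<alpha> (g + h)"
  proof (cases "g = 0 \<or> h = 0 \<or> g + h = 0")
    case True thus ?thesis using \<open>B \<le> val \<alpha> g\<close> \<open>B \<le> val \<alpha> h\<close> by auto
  next
    case False
    hence "min (val \<alpha> g) (val \<alpha> h) \<le> val \<alpha> (g + h)" by (intro val_add) auto
    thus ?thesis using \<open>B \<le> val \<alpha> g\<close> \<open>B \<le> val \<alpha> h\<close> by auto
  qed
qed auto

lemma vge_sum: "(\<And>x. x \<in> S \<Longrightarrow> vge \<alpha> B (f x)) \<Longrightarrow> vge \<alpha> B (\<Sum>x\<in>S. f x)"
  by (induction S rule: infinite_finite_induct) (auto intro: vge_add)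

lemma vge_uminus: "vge \<alpha> B g \<Longrightarrow> vge \<alpha> B (- g)"
  by (auto simp: vge_def val_uminus)

lemma vge_mult: "vge \<alpha> B1 g \<Longrightarrow> vge \<alpha> B2 h \<Longrightarrow> vge \<alpha> (B1 + B2) (g * h)"
  by (cases "g = 0 \<or> h = 0") (auto simp: vge_def val_mult)

lemma vge_self: "vge \<alpha> (val \<alpha> g) g" by (simp add: vge_def)

lemma vge_poly: "vge \<alpha> 0 (Fract p 1)"
  by (cases "p = 0") (auto simp: vge_def val_poly fract_collapse)

lemma hd_val:
  assumes "f \<noteq> 0" "val \<alpha> f < 0"
  shows "(rderiv ^^ k) f \<noteq> 0 \<and> val \<alpha> ((rderiv ^^ k) f) = val \<alpha> f - int k"
proof (induction k)
  case 0 then show ?case using assms by simp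
next
  case (Suc k)
  hence "val \<alpha> ((rderiv ^^ k) f) < 0" using assms by simp
  thus ?case using val_deriv[of "(rderiv ^^ k) f" \<alpha>] Suc by simp
qed

lemma act_L0_val:
  assumes r: "r > 1" and nz: "f \<noteq> 0" and neg: "val \<alpha> f < 0"
  shows "act (L0 r a) f \<noteq> 0 \<and> val \<alpha> (act (L0 r a) f) = val \<alpha> f - int r"
proof -
  define v where "v = val \<alpha> f"
  define H where "H = (\<Sum>k\<in>{1..r-2}. rconst (a k) * (rderiv ^^ k) f) + rx * f"
  have eq: "act (L0 r a) f = (rderiv ^^ r) f + - H" by (simp add: act_L0 H_def)
  have Dr: "(rderiv ^^ r) f \<noteq> 0" "val \<alpha> ((rderiv ^^ r) f) = v - int r"
    using hd_val[OF nz neg, of r] by (auto simp: v_def)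
  have "vge \<alpha> (v - int r + 1) H"
    unfolding H_def
  proof (intro vge_add vge_sum)
    fix k assume k: "k \<in> {1..r-2}"
    have "vge \<alpha> (0 + (v - int k)) (rconst (a k) * (rderiv ^^ k) f)"
    proof (intro vge_mult)
      show "vge \<alpha> 0 (rconst (a k))" by (cases "a k = 0") (auto simp: vge_def val_rconst)
      show "vge \<alpha> (v - int k) ((rderiv ^^ k) f)" using hd_val[OF nz neg, of k] by (simp add: vge_def v_def)
    qed
    thus "vge \<alpha> (v - int r + 1) (rconst (a k) * (rderiv ^^ k) f)"
      by (rule vge_mono[rotated]) (use k r in auto)
  next
    have "vge \<alpha> (0 + v) (rx * f)"
      by (intro vge_mult) (auto simp: rx_def vge_poly v_def vge_self)
    thus "vge \<alpha> (v - int r + 1) (rx * f)"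
      by (rule vge_mono[rotated]) (use r in auto)
  qed
  hence mH: "vge \<alpha> (v - int r + 1) (- H)" by (rule vge_uminus)
  show ?thesis
  proof (cases "- H = 0")
    case True thus ?thesis using eq Dr by (simp add: v_def)
  next
    case False
    hence "val \<alpha> ((rderiv ^^ r) f) < val \<alpha> (- H)" using mH Dr by (auto simp: vge_def)
    hence "(rderiv ^^ r) f + - H \<noteq> 0 \<and> val \<alpha> ((rderiv ^^ r) f + - H) = val \<alpha> ((rderiv ^^ r) f)"
      by (intro val_add_strict Dr(1) False)
    thus ?thesis using eq Dr by (simp only: v_def) simp
  qed
qed

lemma comm_pow:
  assumes "\<And>g. act X (act L g) = act L (act X g)"
  shows "act X ((act L ^^ k) g) = (act L ^^ k) (act X g)"
  by (induction k) (simp_all add: assms)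

lemma pow_0: "(act L ^^ k) 0 = 0"
  by (induction k) simp_all

lemma actM1_poly:
  assumes r: "r > 1" and comm: "\<And>g. act M (act (L0 r a) g) = act (L0 r a) (act M g)"
  shows "\<exists>q. act M 1 = Fract q 1"
proof (cases "act M 1 = 0")
  case True thus ?thesis by (metis fract_collapse(1))
next
  case False
  define b where "b = act M 1"
  have "0 \<le> val \<alpha> b" for \<alpha>
  proof (rule ccontr)
    assume "\<not> 0 \<le> val \<alpha> b"
    hence neg: "val \<alpha> b < 0" by simp
    have it: "(act (L0 r a) ^^ k) b \<noteq> 0 \<and> val \<alpha> ((act (L0 r a) ^^ k) b) = val \<alpha> b - int k * int r" for k
    proof (induction k)
      case 0 thus ?case using False by (simp add: b_def)
    next
      case (Suc k)
      moreover have "0 \<le> int k * int r" by simp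
      ultimately have "val \<alpha> ((act (L0 r a) ^^ k) b) < 0" using neg by linarith
      hence "act (L0 r a) ((act (L0 r a) ^^ k) b) \<noteq> 0 \<and>
             val \<alpha> (act (L0 r a) ((act (L0 r a) ^^ k) b)) = val \<alpha> ((act (L0 r a) ^^ k) b) - int r"
        using act_L0_val[OF r] Suc by blast
      thus ?case using Suc by (simp add: algebra_simps)
    qed
    define B where "B = - (\<Sum>i\<le>degree M. \<bar>val \<alpha> (coeff M i)\<bar>)"
    have B0: "B \<le> 0" by (simp add: B_def sum_nonneg)
    have bound: "vge \<alpha> B (act M (Fract p 1))" for p
      unfolding act_def
    proof (rule vge_sum)
      fix i assume i: "i \<in> {..degree M}"
      have "vge \<alpha> (val \<alpha> (coeff M i) + 0) (coeff M i * (rderiv ^^ i) (Fract p 1))"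
        by (intro vge_mult) (auto simp: vge_self hd_poly vge_poly)
      moreover have "B \<le> val \<alpha> (coeff M i) + 0"
      proof -
        have "\<bar>val \<alpha> (coeff M i)\<bar> \<le> (\<Sum>i\<le>degree M. \<bar>val \<alpha> (coeff M i)\<bar>)"
          by (rule member_le_sum) (use i in auto)
        thus ?thesis by (simp add: B_def)
      qed
      ultimately show "vge \<alpha> B (coeff M i * (rderiv ^^ i) (Fract p 1))"
        by (rule vge_mono[rotated])
    qed
    define k where "k = nat (- B)"
    have "act M ((act (L0 r a) ^^ k) 1) = (act (L0 r a) ^^ k) b"
      using comm_pow[of M "L0 r a", OF comm] by (simp add: b_def)
    moreover have "vge \<alpha> B (act M ((act (L0 r a) ^^ k) 1))"
      using bound by (simp add: actL_pow_1)
    ultimately have "vge \<alpha> B ((act (L0 r a) ^^ k) b)" by simp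
    moreover have "val \<alpha> b - int k * int r < B"
    proof -
      have "int k = - B" using B0 by (simp add: k_def)
      moreover have "int k \<le> int k * int r"
      proof -
        have "k * 1 \<le> k * r" using r by (intro mult_le_mono2) simp
        hence "int (k * 1) \<le> int (k * r)" by (simp only: of_nat_le_iff)
        thus ?thesis by simp
      qed
      ultimately show ?thesis using neg by linarith
    qed
    ultimately show False using it[of k] by (simp add: vge_def)
  qed
  thus ?thesis using val_nonneg_poly[of b] False by (simp add: b_def)
qed

lemma centralizer_sub:
  assumes r: "r > 1" and MC: "dmult M (L0 r a) = dmult (L0 r a) M"
  shows "\<exists>c. M = deval c (L0 r a)"
proof -
  let ?L = "L0 r a"
  have comm: "act M (act ?L g) = act ?L (act M g)" for g
    using arg_cong[OF MC, of "\<lambda>X. act X g"] by (simp add: act_dmult)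
  obtain q where q: "act M 1 = Fract q 1" using actM1_poly[OF r comm] by blast
  obtain c where c: "Fract q 1 = act (deval c ?L) 1" using spanning[of q "degree q" r a] by blast
  define N where "N = M - deval c ?L"
  have commN: "act N (act ?L g) = act ?L (act N g)" for g
    by (simp add: N_def act_diff act_fdiff comm deval_comm_act)
  have N1: "act N 1 = 0" using q c by (simp add: N_def act_diff)
  have "act N (Fract p 1) = 0" for p
  proof -
    obtain c' where c': "Fract p 1 = act (deval c' ?L) 1" using spanning[of p "degree p" r a] by blast
    have "act N (Fract p 1) = (\<Sum>k\<le>degree c'. rconst (coeff c' k) * act N ((act ?L ^^ k) 1))"
      by (simp add: c' act_deval act_fsum act_fcmult)
    also have "\<dots> = 0"
      by (simp add: comm_pow[of N ?L, OF commN] N1 pow_0)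
    finally show ?thesis .
  qed
  hence "N = 0" by (rule faithful0)
  thus ?thesis by (auto simp: N_def)
qed



lemma coeff_dmult: "coeff (dmult A B) n = (\<Sum>i\<le>degree A. \<Sum>j\<le>degree B. \<Sum>k\<le>i.
   if i + j - k = n then coeff A i * of_nat (i choose k) * (rderiv ^^ k) (coeff B j) else 0)"
  by (simp add: dmult_def coeff_sum coeff_monom)

lemma degree_dmult_le: "degree (dmult A B) \<le> degree A + degree B"
proof (rule degree_le, intro allI impI)
  fix n assume n: "degree A + degree B < n"
  show "coeff (dmult A B) n = 0" unfolding coeff_dmult
    by (intro sum.neutral ballI) (use n in auto)
qed

lemma coeff_dmult_top: "coeff (dmult A B) (degree A + degree B) = lead_coeff A * lead_coeff B"
proof -
  let ?X = "\<lambda>i j k. coeff A i * of_nat (i choose k) * (rderiv ^^ k) (coeff B j)"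
  have "coeff (dmult A B) (degree A + degree B) = (\<Sum>i\<le>degree A. \<Sum>j\<le>degree B. \<Sum>k\<le>i.
     if i = degree A \<and> j = degree B \<and> k = 0 then ?X i j k else 0)"
    unfolding coeff_dmult by (intro sum.cong refl if_cong) auto
  also have "\<dots> = (\<Sum>i\<le>degree A. \<Sum>j\<le>degree B. if i = degree A \<and> j = degree B then ?X i j 0 else 0)"
  proof (intro sum.cong refl)
    fix i j
    show "(\<Sum>k\<le>i. if i = degree A \<and> j = degree B \<and> k = 0 then ?X i j k else 0) =
          (if i = degree A \<and> j = degree B then ?X i j 0 else 0)"
      by (cases "i = degree A"; cases "j = degree B") simp_all
  qed
  also have "\<dots> = (\<Sum>i\<le>degree A. if i = degree A then ?X i (degree B) 0 else 0)"
  proof (intro sum.cong refl)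
    fix i
    show "(\<Sum>j\<le>degree B. if i = degree A \<and> j = degree B then ?X i j 0 else 0) =
          (if i = degree A then ?X i (degree B) 0 else 0)"
      by (cases "i = degree A") simp_all
  qed
  also have "\<dots> = ?X (degree A) (degree B) 0" by simp
  finally show ?thesis by simp
qed

lemma dmult_degree_lead:
  assumes "lead_coeff L = 1" "lead_coeff P = 1"
  shows "degree (dmult L P) = degree L + degree P \<and> lead_coeff (dmult L P) = 1"
proof -
  have c: "coeff (dmult L P) (degree L + degree P) = 1"
    using coeff_dmult_top[of L P] assms by simp
  hence "degree L + degree P \<le> degree (dmult L P)" by (intro le_degree) simp
  hence "degree (dmult L P) = degree L + degree P" using degree_dmult_le[of L P] by simp
  thus ?thesis using c by simp
qed

lemma dpow_degree:
  assumes "lead_coeff L = 1"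
  shows "degree (dpow L k) = k * degree L \<and> lead_coeff (dpow L k) = 1"
proof (induction k)
  case 0 then show ?case by (simp add: dpow_def)
next
  case (Suc k)
  have e: "dpow L (Suc k) = dmult L (dpow L k)" by (simp add: dpow_def)
  have h: "degree (dmult L (dpow L k)) = degree L + degree (dpow L k) \<and> lead_coeff (dmult L (dpow L k)) = 1"
    by (rule dmult_degree_lead[OF assms conjunct2[OF Suc.IH]])
  have d: "degree (dpow L (Suc k)) = Suc k * degree L" using h conjunct1[OF Suc.IH] e by simp
  have l: "lead_coeff (dpow L (Suc k)) = 1" using h e by metis
  show ?case using d l by blast
qed

lemma L0_degree:
  assumes r: "r > 1"
  shows "degree (L0 r a) = r \<and> lead_coeff (L0 r a) = 1"
proof -
  have nr: "\<not> r \<le> r - 2" using r by simp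
  have cx: "coeff [:rx:] r = 0" using r by (cases r) simp_all
  have c: "coeff (L0 r a) r = 1"
    using r nr cx by (simp add: L0_def coeff_sum coeff_monom)
  have "degree (L0 r a) \<le> r" unfolding L0_def
    by (intro degree_diff_le degree_sum_le) (auto intro: order.trans[OF degree_monom_le])
  moreover have "r \<le> degree (L0 r a)" using c by (intro le_degree) simp
  ultimately show ?thesis using c by simp
qed

lemma deval_degree:
  assumes r: "r > 1"
  shows "degree (deval c (L0 r a)) = degree c * r"
proof -
  let ?L = "L0 r a"
  have dL: "degree ?L = r" and lL: "lead_coeff ?L = 1" using L0_degree[OF r, of a] by auto
  have dp: "degree (dpow ?L k) = k * r \<and> lead_coeff (dpow ?L k) = 1" for k
  proof -
    have h: "degree (dpow ?L k) = k * degree ?L" "lead_coeff (dpow ?L k) = 1"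
      using dpow_degree[OF lL, of k] by auto
    show ?thesis using h dL by metis
  qed
  define n where "n = degree c"
  have le: "degree (deval c ?L) \<le> n * r" unfolding deval_def n_def[symmetric]
  proof (intro degree_sum_le)
    fix k assume "k \<in> {..n}"
    hence "k * r \<le> n * r" by simp
    thus "degree (smult (rconst (coeff c k)) (dpow ?L k)) \<le> n * r"
      using dp[of k] by (intro order.trans[OF degree_smult_le]) simp
  qed simp
  show ?thesis
  proof (cases "c = 0")
    case True thus ?thesis using le by (simp add: n_def)
  next
    case False
    have "coeff (deval c ?L) (n * r) = (\<Sum>k\<le>n. rconst (coeff c k) * coeff (dpow ?L k) (n * r))"
      by (simp add: deval_def n_def coeff_sum)
    also have "\<dots> = (\<Sum>k\<le>n. if k = n then rconst (coeff c n) else 0)"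
    proof (intro sum.cong refl)
      fix k assume k: "k \<in> {..n}"
      show "rconst (coeff c k) * coeff (dpow ?L k) (n * r) = (if k = n then rconst (coeff c n) else 0)"
      proof (cases "k = n")
        case True
        have "coeff (dpow ?L n) (n * r) = 1" using dp[of n] by metis
        thus ?thesis using True by simp
      next
        case False
        hence "k < n" using k by simp
        hence "k * r < n * r" using r by simp
        thus ?thesis using dp[of k] False by (simp add: coeff_eq_0)
      qed
    qed
    also have "\<dots> = rconst (coeff c n)" by simp
    finally have "coeff (deval c ?L) (n * r) \<noteq> 0" using False by (simp add: n_def)
    hence "n * r \<le> degree (deval c ?L)" by (rule le_degree)
    thus ?thesis using le by (simp add: n_def)
  qed
qed

theorem mainTheorem14:
  fixes r :: nat and a :: "nat \<Rightarrow> complex"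
  assumes "r > 1"
  shows "centralizer (L0 r a) = {deval p (L0 r a) | p. True}
         \<and> true_rank (L0 r a) = r"
proof -
  have C: "centralizer (L0 r a) = {deval p (L0 r a) | p. True}"
  proof
    show "centralizer (L0 r a) \<subseteq> {deval p (L0 r a) | p. True}"
      using centralizer_sub[OF assms] by (auto simp: centralizer_def)
    show "{deval p (L0 r a) | p. True} \<subseteq> centralizer (L0 r a)"
      using deval_comm by (auto simp: centralizer_def)
  qed
  have S: "dord ` centralizer (L0 r a) = {degree (p::complex poly) * r |p. True}"
    unfolding C dord_def
  proof (intro equalityI subsetI)
    fix x assume "x \<in> degree ` {deval p (L0 r a) |p. True}"
    then obtain p where "x = degree (deval p (L0 r a))" by auto
    hence "x = degree p * r" using deval_degree[OF assms, of p a] by simp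
    thus "x \<in> {degree (p::complex poly) * r |p. True}" by blast
  next
    fix x assume "x \<in> {degree (p::complex poly) * r |p. True}"
    then obtain p :: "complex poly" where "x = degree p * r" by blast
    hence "x = degree (deval p (L0 r a))" using deval_degree[OF assms, of p a] by simp
    thus "x \<in> degree ` {deval p (L0 r a) |p. True}" by blast
  qed
  have "r \<in> dord ` centralizer (L0 r a)" unfolding S
    by (rule CollectI, rule exI[of _ "[:0, 1:]"]) simp
  hence "Gcd (dord ` centralizer (L0 r a)) dvd r" by (rule Gcd_dvd)
  moreover have "r dvd Gcd (dord ` centralizer (L0 r a))" unfolding S
    by (auto simp: dvd_Gcd_iff)
  ultimately have "Gcd (dord ` centralizer (L0 r a)) = r" by (rule dvd_antisym)
  thus ?thesis using C by (simp add: true_rank_def op_rank_def)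
qed

end
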